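(* Assume $\mathbb E[\xi^2+\xi^{-1}+\nu^3]<\infty$ and $p_1\,m\ge1$. Then $$\liminf_{n\to\infty}\frac{\mathbb E[R_n]}{n}=\infty.$$
   Context: Let $\mathbf p=(p_k)_{k\ge0}$ be a probability distribution on the nonnegative integers with $p_0=0$ and finite mean $m=\sum_k kp_k>1$. Let $\mathbb T$ be a Galton–Watson tree with offspring distribution $\mathbf p$, rooted at $\varnothing$, and $\nu$ the number of children of the root. For a vertex $x$, $|x|$ is its depth and $\overleftarrow{x}$ its parent; $\mathbb T_n=\{x\in\mathbb T:|x|=n\}$; the edge $e=\{\overleftarrow x,x\}$ has depth $d(e)=|x|$. Let $\xi$ be a strictly positive random variable; conditionally on $\mathbb T$, $\{\xi(e)\}$ are i.i.d. copies of $\xi$ and edge $e$ gets resistance $r(e)=m^{d(e)}\xi(e)$. $C_n$ is the effective conductance between $\varnothing$ and $\mathbb T_n$ and $R_n=1/C_n$ the effective resistance. *)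

theory Defs
  imports "HOL-Probability.Probability"
begin

text \<open>Vertices of the Galton-Watson tree are Ulam-Harris words, stored reversed:
  the word \<open>i # x\<close> is the \<open>i\<close>-th child (0-based) of \<open>x\<close>; the root is \<open>[]\<close>,
  the parent of a non-root vertex \<open>x\<close> is \<open>tl x\<close>, its depth is \<open>length x\<close>.
  \<open>N x\<close> is the number of children of vertex \<open>x\<close>.  The edge between \<open>tl x\<close> and \<open>x\<close>
  is identified with the vertex \<open>x \<noteq> []\<close>; its depth is \<open>length x\<close> and it carries
  the weight \<open>\<xi> x\<close>.\<close>

fun in_tree :: "(nat list \<Rightarrow> nat) \<Rightarrow> nat list \<Rightarrow> bool" where
  "in_tree N [] = True"
| "in_tree N (i # x) = (in_tree N x \<and> i < N x)"

definition tree_ball :: "(nat list \<Rightarrow> nat) \<Rightarrow> nat \<Rightarrow> nat list set" where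
  "tree_ball N n = {x. in_tree N x \<and> length x \<le> n}"

definition tree_level :: "(nat list \<Rightarrow> nat) \<Rightarrow> nat \<Rightarrow> nat list set" where
  "tree_level N n = {x. in_tree N x \<and> length x = n}"

text \<open>Effective conductance between the root and \<open>T_n\<close> (Dirichlet principle), where the
  edge ending at \<open>x\<close> has resistance \<open>m ^ length x * \<xi> x\<close>. Values in \<open>[0,\<infinity>]\<close>
  (for \<open>n = 0\<close> the constraint set is empty, so \<open>C_0 = \<infinity>\<close>).\<close>
definition eff_conductance ::
  "real \<Rightarrow> (nat list \<Rightarrow> nat) \<Rightarrow> (nat list \<Rightarrow> real) \<Rightarrow> nat \<Rightarrow> ennreal" where
  "eff_conductance m N \<xi> n =
     (INF f \<in> {f :: nat list \<Rightarrow> real. f [] = 1 \<and> (\<forall>x \<in> tree_level N n. f x = 0)}.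
        \<Sum>x \<in> tree_ball N n - {[]}. ennreal ((f x - f (tl x))\<^sup>2 / (m ^ length x * \<xi> x)))"

definition eff_resistance ::
  "real \<Rightarrow> (nat list \<Rightarrow> nat) \<Rightarrow> (nat list \<Rightarrow> real) \<Rightarrow> nat \<Rightarrow> ennreal" where
  "eff_resistance m N \<xi> n = 1 / eff_conductance m N \<xi> n"

definition gw_space :: "nat pmf \<Rightarrow> real measure \<Rightarrow>
    ((nat list \<Rightarrow> nat) \<times> (nat list \<Rightarrow> real)) measure" where
  "gw_space p Q = (\<Pi>\<^sub>M x \<in> UNIV. measure_pmf p) \<Otimes>\<^sub>M (\<Pi>\<^sub>M x \<in> UNIV. Q)"

end

theory Submission
  imports Defs
begin


lemma in_tree_drop: "in_tree N x \<Longrightarrow> in_tree N (drop l x)"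
proof (induction x arbitrary: l)
  case Nil then show ?case by simp
next
  case (Cons a x) then show ?case by (cases l) auto
qed

definition spine :: "nat \<Rightarrow> nat list" where "spine i = replicate i 0"

lemma spine_inj: "inj spine" unfolding spine_def by (simp add: inj_def)

lemma length_spine[simp]: "length (spine i) = i" by (simp add: spine_def)

lemma in_tree_spine_unique:
  assumes "\<forall>i<j. N (spine i) = 1" "in_tree N z" "length z \<le> j"
  shows "z = spine (length z)"
  using assms(2,3)
proof (induction z)
  case Nil then show ?case by (simp add: spine_def)
next
  case (Cons a z)
  then have z: "z = spine (length z)" by simp
  have "a < N z" using Cons by simp
  moreover have "N z = 1" using assms(1) Cons(3) z by (metis Suc_le_lessD length_Cons)
  ultimately have "a = 0" by simp
  then show ?case using z by (simp add: spine_def)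
qed

definition LK :: "nat \<Rightarrow> nat \<Rightarrow> nat list set" where
  "LK n K = {xs. set xs \<subseteq> {..<K} \<and> length xs \<le> n}"

lemma finite_LK: "finite (LK n K)"
  unfolding LK_def by (rule finite_lists_length_le) simp

lemma LK_mono: "K \<le> K' \<Longrightarrow> LK n K \<subseteq> LK n K'"
  unfolding LK_def by auto

lemma ball_cover: "\<exists>K. tree_ball N n \<subseteq> LK n K"
proof (induction n)
  case 0 then show ?case by (auto simp: tree_ball_def LK_def)
next
  case (Suc n)
  then obtain K where K: "tree_ball N n \<subseteq> LK n K" by blast
  define K' where "K' = K + (\<Sum>y\<in>LK n K. N y)"
  have "tree_ball N (Suc n) \<subseteq> LK (Suc n) K'"
  proof
    fix x assume x: "x \<in> tree_ball N (Suc n)"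
    show "x \<in> LK (Suc n) K'"
    proof (cases x)
      case Nil then show ?thesis by (simp add: LK_def)
    next
      case (Cons a y)
      with x have y: "y \<in> tree_ball N n" and ay: "a < N y" by (auto simp: tree_ball_def)
      with K have yL: "y \<in> LK n K" by blast
      have "N y \<le> (\<Sum>y\<in>LK n K. N y)"
        by (rule member_le_sum[OF yL _ finite_LK]) simp
      then have "a < K'" using ay unfolding K'_def by linarith
      moreover have "set y \<subseteq> {..<K'}" using yL unfolding LK_def K'_def by auto
      ultimately show ?thesis using Cons yL by (auto simp: LK_def)
    qed
  qed
  then show ?case by blast
qed



definition fj :: "nat \<Rightarrow> nat \<Rightarrow> nat list \<Rightarrow> real" where
  "fj n j x = (if length x \<le> j then 1 else (real n - real (length x)) / (real n - real j))"

definition En :: "real \<Rightarrow> (nat list \<Rightarrow> nat) \<Rightarrow> (nat list \<Rightarrow> real) \<Rightarrow> nat \<Rightarrow> nat \<Rightarrow> ennreal" where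
  "En m N \<xi> n j = (\<Sum>x \<in> tree_ball N n - {[]}. ennreal ((fj n j x - fj n j (tl x))\<^sup>2 / (m ^ length x * \<xi> x)))"

lemma cond_le_En:
  assumes "j < n"
  shows "eff_conductance m N \<xi> n \<le> En m N \<xi> n j"
  unfolding eff_conductance_def En_def
  by (rule INF_lower) (use assms in \<open>auto simp: fj_def tree_level_def\<close>)

definition gterm :: "real \<Rightarrow> nat \<Rightarrow> nat \<Rightarrow> (nat list \<Rightarrow> nat) \<Rightarrow> (nat list \<Rightarrow> real) \<Rightarrow> nat list \<Rightarrow> ennreal" where
  "gterm m n j N \<xi> x = (if in_tree N x \<and> j < length x
      then ennreal (1 / ((real n - real j)\<^sup>2 * m ^ length x)) else 0) * ennreal (1 / \<xi> x)"

lemma En_term_le: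
  assumes "j < n" "m > 0" "x \<in> tree_ball N n - {[]}"
  shows "ennreal ((fj n j x - fj n j (tl x))\<^sup>2 / (m ^ length x * \<xi> x)) \<le> gterm m n j N \<xi> x"
proof (cases "length x \<le> j")
  case True
  then have "length (tl x) \<le> j" by simp
  then show ?thesis using True by (simp add: fj_def)
next
  case False
  have xin: "in_tree N x" and xl: "length x \<le> n" using assms(3) by (auto simp: tree_ball_def)
  have nj: "real n - real j > 0" using assms(1) by simp
  have d: "fj n j x - fj n j (tl x) = - 1 / (real n - real j)"
  proof (cases "length x = Suc j")
    case True
    then show ?thesis using nj by (simp add: fj_def field_simps)
  next
    case F: False
    then have "\<not> length (tl x) \<le> j" using False by simp
    have a: "fj n j x = (real n - real (length x)) / (real n - real j)" using False by (simp add: fj_def)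
    have b: "fj n j (tl x) = (real n - (real (length x) - 1)) / (real n - real j)"
      using \<open>\<not> length (tl x) \<le> j\<close> False by (simp add: fj_def of_nat_diff)
    have "fj n j x - fj n j (tl x) = ((real n - real (length x)) - (real n - (real (length x) - 1))) / (real n - real j)"
      unfolding a b by (rule diff_divide_distrib[symmetric])
    then show ?thesis by simp
  qed
  have pos: "0 < (real n - real j)\<^sup>2 * m ^ length x" using assms(1,2) by simp
  show ?thesis
  proof (cases "\<xi> x > 0")
    case True
    have "(fj n j x - fj n j (tl x))\<^sup>2 / (m ^ length x * \<xi> x)
        = (1 / ((real n - real j)\<^sup>2 * m ^ length x)) * (1 / \<xi> x)"
      unfolding d by (simp add: power2_eq_square field_simps)
    then show ?thesis using False xin True pos
      by (simp add: gterm_def ennreal_mult[symmetric])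
  next
    case False
    then have "(fj n j x - fj n j (tl x))\<^sup>2 / (m ^ length x * \<xi> x) \<le> 0"
      using assms(2) False by (intro divide_nonneg_nonpos mult_nonneg_nonpos) auto
    then have "ennreal ((fj n j x - fj n j (tl x))\<^sup>2 / (m ^ length x * \<xi> x)) = 0"
      using ennreal_eq_0_iff by blast
    then show ?thesis by simp
  qed
qed

lemma En_le_sum:
  assumes "j < n" "m > 0" "tree_ball N n \<subseteq> LK n K"
  shows "En m N \<xi> n j \<le> (\<Sum>x\<in>LK n K. gterm m n j N \<xi> x)"
proof -
  have "En m N \<xi> n j \<le> (\<Sum>x \<in> tree_ball N n - {[]}. gterm m n j N \<xi> x)"
    unfolding En_def by (intro sum_mono En_term_le assms)
  also have "\<dots> \<le> (\<Sum>x\<in>LK n K. gterm m n j N \<xi> x)"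
    by (rule sum_mono2[OF finite_LK]) (use assms(3) in auto)
  finally show ?thesis .
qed

lemma recip_anti: "(C::ennreal) \<le> H \<Longrightarrow> 1 / H \<le> 1 / C"
proof (cases "C = 0")
  case True then show ?thesis by (simp add: ennreal_divide_zero)
next
  case False
  show "C \<le> H \<Longrightarrow> 1 / H \<le> 1 / C"
  proof (cases "H = top")
    case True then show ?thesis by simp
  next
    case Hf: False
    assume le: "C \<le> H"
    then have Cf: "C \<noteq> top" using Hf top.extremum_uniqueI by blast
    obtain c where c: "C = ennreal c" "c \<ge> 0" using Cf ennreal_cases by auto
    obtain h where h: "H = ennreal h" "h \<ge> 0" using Hf ennreal_cases by auto
    have cp: "c > 0" using c False by auto
    have "c \<le> h" using le c h by simp
    then have "1 / h \<le> 1 / c" using cp by (simp add: frac_le)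
    moreover have "1 / H = ennreal (1/h)" using h cp \<open>c \<le> h\<close> divide_ennreal[of 1 h] by simp
    moreover have "1 / C = ennreal (1/c)" using c cp divide_ennreal[of 1 c] by simp
    ultimately show ?thesis by (simp add: ennreal_leI)
  qed
qed

lemma recip_bound:
  fixes C H :: ennreal and t :: real
  assumes "C \<le> H" "t \<ge> 0"
  shows "ennreal (2 * t) - ennreal (t\<^sup>2) * H \<le> 1 / C"
proof -
  have "ennreal (2 * t) - ennreal (t\<^sup>2) * H \<le> 1 / H"
  proof (cases H)
    case (real h)
    show ?thesis
    proof (cases "h = 0")
      case True then show ?thesis using real by (simp add: ennreal_divide_zero)
    next
      case False
      with real have h: "h > 0" by simp
      have "2 * t \<le> 1 / h + t\<^sup>2 * h"
      proof -
        have "0 \<le> (1 - t * h)\<^sup>2 / h" using h by simp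
        also have "(1 - t * h)\<^sup>2 / h = 1 / h + t\<^sup>2 * h - 2 * t"
          using h by (simp add: power2_eq_square field_simps)
        finally show ?thesis by simp
      qed
      then have "2 * t - t\<^sup>2 * h \<le> 1 / h" by simp
      have e1: "1 / ennreal h = ennreal (1 / h)" using h divide_ennreal[of 1 h] by simp
      have "ennreal (2 * t) - ennreal (t\<^sup>2) * H = ennreal (2 * t - t\<^sup>2 * h)"
        using real h assms(2) by (simp add: ennreal_mult[symmetric] ennreal_minus)
      then show ?thesis using real e1 \<open>2 * t - t\<^sup>2 * h \<le> 1 / h\<close> by (simp add: ennreal_leI)
    qed
  next
    case top
    show ?thesis
    proof (cases "t = 0")
      case True then show ?thesis by simp
    next
      case False
      then have "ennreal (t\<^sup>2) * H = top" using top assms(2) by (simp add: ennreal_mult_top)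
      then show ?thesis by simp
    qed
  qed
  also have "1 / H \<le> 1 / C" using assms(1) by (rule recip_anti)
  finally show ?thesis .
qed



lemma in_tree_nth: "in_tree N x \<Longrightarrow> l < length x \<Longrightarrow> x ! l < N (drop (Suc l) x)"
proof (induction x arbitrary: l)
  case Nil then show ?case by simp
next
  case (Cons a x) then show ?case by (cases l) auto
qed

lemma pps_pmf: "product_prob_space (\<lambda>_::nat list. measure_pmf p)"
  by unfold_locales simp

lemma space_M1: "space (PiM UNIV (\<lambda>_::nat list. measure_pmf p)) = UNIV"
  by (simp add: space_PiM)

lemma meas_in_tree[measurable]:
  "Measurable.pred (PiM UNIV (\<lambda>_::nat list. measure_pmf p)) (\<lambda>N. in_tree N x)"
proof (induction x)
  case Nil then show ?case by simp
next
  case (Cons a x)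
  have "(\<lambda>N. N x) \<in> measurable (PiM UNIV (\<lambda>_::nat list. measure_pmf p)) (count_space UNIV)"
    using measurable_component_singleton[of x UNIV "\<lambda>_. measure_pmf p"] by simp
  then have "Measurable.pred (PiM UNIV (\<lambda>_::nat list. measure_pmf p)) (\<lambda>N. a < N x)"
    by measurable
  with Cons show ?case by simp
qed

lemma meas_comp[measurable]:
  "(\<lambda>N. N x) \<in> measurable (PiM UNIV (\<lambda>_::nat list. measure_pmf p)) (count_space UNIV)"
    using measurable_component_singleton[of x UNIV "\<lambda>_. measure_pmf p"] by simp

definition Bset :: "nat \<Rightarrow> (nat list \<Rightarrow> nat) set" where
  "Bset j = {N. (\<forall>i<j. N (spine i) = 1) \<and> N (spine j) \<noteq> 1}"

lemma Bset_meas[measurable]: "Bset j \<in> sets (PiM UNIV (\<lambda>_::nat list. measure_pmf p))"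
proof -
  have "Bset j = {N \<in> space (PiM UNIV (\<lambda>_::nat list. measure_pmf p)). (\<forall>i<j. N (spine i) = 1) \<and> N (spine j) \<noteq> 1}"
    by (simp add: Bset_def space_M1)
  also have "\<dots> \<in> sets (PiM UNIV (\<lambda>_::nat list. measure_pmf p))" by measurable
  finally show ?thesis .
qed

lemma Bset_disj: "i < j \<Longrightarrow> Bset i \<inter> Bset j = {}"
  by (auto simp: Bset_def)

lemma emeasure_Bset:
  "emeasure (PiM UNIV (\<lambda>_::nat list. measure_pmf p)) (Bset j) = ennreal (pmf p 1) ^ j * ennreal (1 - pmf p 1)"
proof -
  interpret product_prob_space "\<lambda>_::nat list. measure_pmf p" UNIV by (rule pps_pmf)
  define X where "X c = (if length c < j then {1} else UNIV - {1::nat})" for c :: "nat list"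
  have "Bset j = {N \<in> space (PiM UNIV (\<lambda>_::nat list. measure_pmf p)). \<forall>c\<in>spine ` {..j}. N c \<in> X c}"
  proof -
    have "(\<forall>c\<in>spine ` {..j}. N c \<in> X c) \<longleftrightarrow> (\<forall>i\<le>j. N (spine i) \<in> X (spine i))" for N by blast
    moreover have "(\<forall>i\<le>j. N (spine i) \<in> X (spine i)) \<longleftrightarrow> (\<forall>i<j. N (spine i) = 1) \<and> N (spine j) \<noteq> 1" for N
      unfolding X_def length_spine
      by (metis DiffD2 DiffI UNIV_I le_eq_less_or_eq less_irrefl_nat singletonD singletonI)
    ultimately show ?thesis by (auto simp: Bset_def space_M1)
  qed
  then have "emeasure (PiM UNIV (\<lambda>_::nat list. measure_pmf p)) (Bset j)
      = (\<Prod>c\<in>spine ` {..j}. emeasure (measure_pmf p) (X c))"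
    by (simp only:) (rule emeasure_PiM_Collect, auto)
  also have "\<dots> = (\<Prod>i\<in>{..j}. emeasure (measure_pmf p) (X (spine i)))"
    by (rule prod.reindex_cong[OF inj_on_subset[OF spine_inj]]) auto
  also have "\<dots> = (\<Prod>i\<in>{..<j}. emeasure (measure_pmf p) (X (spine i))) * emeasure (measure_pmf p) (X (spine j))"
    by (simp add: lessThan_Suc_atMost[symmetric])
  also have "\<dots> = ennreal (pmf p 1) ^ j * ennreal (1 - pmf p 1)"
  proof -
    have "(\<Prod>i\<in>{..<j}. emeasure (measure_pmf p) (X (spine i))) = (\<Prod>i\<in>{..<j}. ennreal (pmf p 1))"
      by (rule prod.cong) (auto simp: X_def emeasure_pmf_single)
    moreover have "emeasure (measure_pmf p) (X (spine j)) = ennreal (1 - pmf p 1)"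
    proof -
      have "measure (measure_pmf p) (UNIV - {1}) = 1 - measure (measure_pmf p) {1}"
        using measure_pmf.prob_compl[of "{1}" p] by simp
      then show ?thesis by (simp add: X_def measure_pmf.emeasure_eq_measure measure_pmf_single)
    qed
    ultimately show ?thesis by simp
  qed
  finally show ?thesis .
qed



definition qv :: "nat pmf \<Rightarrow> nat \<Rightarrow> ennreal" where
  "qv p i = emeasure (measure_pmf p) {v. i < v}"

definition beta :: "nat pmf \<Rightarrow> nat \<Rightarrow> nat list \<Rightarrow> ennreal" where
  "beta p j x = (if drop (length x - j) x = spine j
     then ennreal (pmf p 1) ^ j * (\<Prod>l<length x - j. qv p (x ! l)) else 0)"

lemma emeasure_AT:
  assumes "j \<le> length x"
  shows "emeasure (PiM UNIV (\<lambda>_::nat list. measure_pmf p)) {N. (\<forall>i<j. N (spine i) = 1) \<and> in_tree N x}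
         \<le> beta p j x"
proof -
  interpret product_prob_space "\<lambda>_::nat list. measure_pmf p" UNIV by (rule pps_pmf)
  let ?M = "PiM UNIV (\<lambda>_::nat list. measure_pmf p)"
  let ?S = "{N. (\<forall>i<j. N (spine i) = 1) \<and> in_tree N x}"
  define k where "k = length x"
  show ?thesis
  proof (cases "drop (k - j) x = spine j")
    case False
    have "?S = {}"
    proof (rule ccontr)
      assume "?S \<noteq> {}"
      then obtain N where N: "\<forall>i<j. N (spine i) = 1" "in_tree N x" by blast
      have "in_tree N (drop (k - j) x)" using N(2) by (rule in_tree_drop)
      moreover have "length (drop (k - j) x) = j" using assms unfolding k_def by simp
      ultimately have "drop (k - j) x = spine j" using in_tree_spine_unique[OF N(1)] by force
      with False show False by simp
    qed
    then have "emeasure ?M ?S = 0" by (simp only: emeasure_empty)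
    then show ?thesis by simp
  next
    case True
    define J where "J = spine ` {..<j} \<union> (\<lambda>l. drop (Suc l) x) ` {..<k-j}"
    define X where "X c = (if length c < j then {1} else {v. x ! (k - Suc (length c)) < v})" for c :: "nat list"
    have fin: "finite J" unfolding J_def by simp
    have sub: "?S \<subseteq> {N \<in> space ?M. \<forall>c\<in>J. N c \<in> X c}"
    proof
      fix N assume N: "N \<in> ?S"
      have "N c \<in> X c" if c: "c \<in> J" for c
      proof -
        from c consider (a) i where "i < j" "c = spine i" | (b) l where "l < k - j" "c = drop (Suc l) x"
          unfolding J_def by blast
        then show ?thesis
        proof cases
          case a then show ?thesis using N by (simp add: X_def)
        next
          case b
          have "length c = k - Suc l" using b unfolding k_def by simp
          moreover have "k - Suc (k - Suc l) = l" using b by simp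
          moreover have "\<not> k - Suc l < j" using b by simp
          moreover have "x ! l < N (drop (Suc l) x)"
            using N b in_tree_nth[of N x l] unfolding k_def by simp
          ultimately show ?thesis using b by (simp add: X_def)
        qed
      qed
      then show "N \<in> {N \<in> space ?M. \<forall>c\<in>J. N c \<in> X c}" by (simp add: space_M1)
    qed
    have "emeasure ?M ?S \<le> emeasure ?M {N \<in> space ?M. \<forall>c\<in>J. N c \<in> X c}"
    proof (rule emeasure_mono[OF sub])
      show "{N \<in> space ?M. \<forall>c\<in>J. N c \<in> X c} \<in> sets ?M"
      proof (rule sets.sets_Collect_finite_All[OF _ fin])
        fix c
        have "(\<lambda>N. N c) \<in> measurable ?M (count_space UNIV)" by (rule meas_comp)
        then have "(\<lambda>N. N c) -` X c \<inter> space ?M \<in> sets ?M" by (rule measurable_sets) simp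
        moreover have "{N \<in> space ?M. N c \<in> X c} = (\<lambda>N. N c) -` X c \<inter> space ?M" by auto
        ultimately show "{N \<in> space ?M. N c \<in> X c} \<in> sets ?M" by simp
      qed
    qed
    also have "\<dots> = (\<Prod>c\<in>J. emeasure (measure_pmf p) (X c))"
      by (rule emeasure_PiM_Collect) (auto simp: fin)
    also have "\<dots> = (\<Prod>c\<in>spine ` {..<j}. emeasure (measure_pmf p) (X c)) *
                    (\<Prod>c\<in>(\<lambda>l. drop (Suc l) x) ` {..<k-j}. emeasure (measure_pmf p) (X c))"
      unfolding J_def
    proof (rule prod.union_disjoint)
      show "spine ` {..<j} \<inter> (\<lambda>l. drop (Suc l) x) ` {..<k - j} = {}"
      proof (safe)
        fix a b assume "a < j" "spine a = drop (Suc b) x" "b < k - j"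
        then have "length (spine a) = length (drop (Suc b) x)" by simp
        with \<open>a < j\<close> \<open>b < k - j\<close> show "spine a \<in> {}" unfolding k_def by simp
      qed
    qed auto
    also have "(\<Prod>c\<in>spine ` {..<j}. emeasure (measure_pmf p) (X c)) = ennreal (pmf p 1) ^ j"
    proof -
      have "(\<Prod>c\<in>spine ` {..<j}. emeasure (measure_pmf p) (X c)) = (\<Prod>i\<in>{..<j}. emeasure (measure_pmf p) (X (spine i)))"
        by (rule prod.reindex_cong[OF inj_on_subset[OF spine_inj]]) auto
      also have "\<dots> = (\<Prod>i\<in>{..<j}. ennreal (pmf p 1))"
        by (rule prod.cong) (auto simp: X_def emeasure_pmf_single)
      finally show ?thesis by simp
    qed
    also have "(\<Prod>c\<in>(\<lambda>l. drop (Suc l) x) ` {..<k-j}. emeasure (measure_pmf p) (X c)) = (\<Prod>l<k - j. qv p (x ! l))"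
    proof -
      have inj: "inj_on (\<lambda>l. drop (Suc l) x) {..<k-j}"
      proof (rule inj_onI)
        fix a b assume "a \<in> {..<k-j}" "b \<in> {..<k-j}" "drop (Suc a) x = drop (Suc b) x"
        then have "length (drop (Suc a) x) = length (drop (Suc b) x)" by simp
        with \<open>a \<in> {..<k-j}\<close> \<open>b \<in> {..<k-j}\<close> show "a = b" unfolding k_def by simp
      qed
      have "(\<Prod>c\<in>(\<lambda>l. drop (Suc l) x) ` {..<k-j}. emeasure (measure_pmf p) (X c))
          = (\<Prod>l\<in>{..<k-j}. emeasure (measure_pmf p) (X (drop (Suc l) x)))"
        by (rule prod.reindex_cong[OF inj]) auto
      also have "\<dots> = (\<Prod>l<k - j. qv p (x ! l))"
      proof (rule prod.cong[OF refl])
        fix l assume l: "l \<in> {..<k-j}"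
        have "length (drop (Suc l) x) = k - Suc l" unfolding k_def by simp
        moreover have "k - Suc (k - Suc l) = l" using l by simp
        moreover have "\<not> k - Suc l < j" using l by simp
        ultimately show "emeasure (measure_pmf p) (X (drop (Suc l) x)) = qv p (x ! l)"
          by (simp add: X_def qv_def)
      qed
      finally show ?thesis .
    qed
    finally show ?thesis using True unfolding beta_def k_def by simp
  qed
qed



lemma lists_Suc_eq:
  "{y. length y = Suc d \<and> set y \<subseteq> A} = (\<lambda>(i, y). i # y) ` (A \<times> {y. length y = d \<and> set y \<subseteq> A})"
proof safe
  fix y assume "length y = Suc d" "set y \<subseteq> A"
  then show "y \<in> (\<lambda>(i, y). i # y) ` (A \<times> {y. length y = d \<and> set y \<subseteq> A})"
    by (cases y) auto
qed auto

lemma sum_lists_prod: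
  fixes f :: "nat \<Rightarrow> ennreal"
  shows "(\<Sum>y\<in>{y. length y = d \<and> set y \<subseteq> {..<K}}. \<Prod>l<d. f (y ! l)) = (\<Sum>i<K. f i) ^ d"
proof (induction d)
  case 0
  have "{y. length y = 0 \<and> set y \<subseteq> {..<K}} = {[]}" by auto
  then show ?case by simp
next
  case (Suc d)
  let ?Y = "{y. length y = d \<and> set y \<subseteq> {..<K}}"
  have inj: "inj_on (\<lambda>(i, y). i # y) ({..<K} \<times> ?Y)" by (auto simp: inj_on_def)
  have "(\<Sum>y\<in>{y. length y = Suc d \<and> set y \<subseteq> {..<K}}. \<Prod>l<Suc d. f (y ! l))
      = (\<Sum>z\<in>{..<K} \<times> ?Y. \<Prod>l<Suc d. f ((case z of (i, y) \<Rightarrow> i # y) ! l))"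
    unfolding lists_Suc_eq by (rule sum.reindex[OF inj, unfolded comp_def])
  also have "\<dots> = (\<Sum>(i, y)\<in>{..<K} \<times> ?Y. f i * (\<Prod>l<d. f (y ! l)))"
    by (rule sum.cong[OF refl]) (auto simp del: prod.lessThan_Suc simp: prod.lessThan_Suc_shift)
  also have "\<dots> = (\<Sum>i<K. \<Sum>y\<in>?Y. f i * (\<Prod>l<d. f (y ! l)))"
    by (rule sum.cartesian_product[symmetric])
  also have "\<dots> = (\<Sum>i<K. f i) * (\<Sum>y\<in>?Y. \<Prod>l<d. f (y ! l))"
    by (rule sum_product[symmetric])
  finally show ?case using Suc by simp
qed

lemma sum_ind_le: "(\<Sum>i<K. (if i < v then 1 else 0 :: ennreal)) = of_nat (min K v)"
  by (induction K) (auto simp: min_def)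

lemma sum_qv_le:
  assumes "integrable (measure_pmf p) real"
  shows "(\<Sum>i<K. qv p i) \<le> ennreal (measure_pmf.expectation p real)"
proof -
  have "(\<Sum>i<K. qv p i) = (\<Sum>i<K. \<integral>\<^sup>+ v. indicator {v. i < v} v \<partial>measure_pmf p)"
    unfolding qv_def by (simp add: nn_integral_indicator)
  also have "\<dots> = (\<integral>\<^sup>+ v. (\<Sum>i<K. indicator {v. i < v} v) \<partial>measure_pmf p)"
    by (rule nn_integral_sum[symmetric]) simp
  also have "\<dots> \<le> (\<integral>\<^sup>+ v. ennreal (real v) \<partial>measure_pmf p)"
  proof (rule nn_integral_mono)
    fix v :: nat
    have "(\<Sum>i<K. indicator {v. i < v} v :: ennreal) = (\<Sum>i<K. (if i < v then 1 else 0 :: ennreal))"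
      by (rule sum.cong) (auto simp: indicator_def)
    also have "\<dots> = of_nat (min K v)" by (rule sum_ind_le)
    also have "\<dots> \<le> ennreal (real v)" by (simp add: ennreal_of_nat_eq_real_of_nat)
    finally show "(\<Sum>i<K. indicator {v. i < v} v) \<le> ennreal (real v)" .
  qed
  also have "\<dots> = ennreal (measure_pmf.expectation p real)"
    by (rule nn_integral_eq_integral[OF assms]) simp
  finally show ?thesis .
qed

lemma sum_beta:
  assumes "j \<le> k" "integrable (measure_pmf p) real"
  shows "(\<Sum>x\<in>{x\<in>LK n K. length x = k}. beta p j x)
    \<le> ennreal (pmf p 1) ^ j * ennreal (measure_pmf.expectation p real) ^ (k - j)"
proof -
  let ?S = "{x\<in>LK n K. length x = k}"
  let ?Y = "{y. length y = k - j \<and> set y \<subseteq> {..<K}}"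
  let ?g = "\<lambda>y. y @ spine j"
  have finS: "finite ?S" using finite_LK by simp
  have finY: "finite ?Y" by (rule finite_subset[OF _ finite_lists_length_eq[of "{..<K}" "k-j"]]) auto
  have "(\<Sum>x\<in>?S. beta p j x) = (\<Sum>x\<in>{x\<in>?S. drop (length x - j) x = spine j}. beta p j x)"
    by (rule sum.mono_neutral_right[OF finS]) (auto simp: beta_def)
  also have "\<dots> \<le> (\<Sum>x\<in>?g ` ?Y. beta p j x)"
  proof (rule sum_mono2)
    show "finite (?g ` ?Y)" using finY by simp
    show "{x\<in>?S. drop (length x - j) x = spine j} \<subseteq> ?g ` ?Y"
    proof
      fix x assume "x \<in> {x\<in>?S. drop (length x - j) x = spine j}"
      then have x: "x \<in> LK n K" "length x = k" "drop (length x - j) x = spine j" by auto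
      have "x = take (k - j) x @ spine j" using x by (metis append_take_drop_id)
      moreover have "take (k - j) x \<in> ?Y" using x assms(1)
        by (auto simp: LK_def dest: in_set_takeD)
      ultimately show "x \<in> ?g ` ?Y" by blast
    qed
  qed simp
  also have "\<dots> = (\<Sum>y\<in>?Y. beta p j (?g y))"
    by (subst sum.reindex) (auto simp: inj_on_def)
  also have "\<dots> = (\<Sum>y\<in>?Y. ennreal (pmf p 1) ^ j * (\<Prod>l<k - j. qv p (y ! l)))"
  proof (rule sum.cong[OF refl])
    fix y assume y: "y \<in> ?Y"
    have "(\<Prod>l<k - j. qv p ((y @ spine j) ! l)) = (\<Prod>l<k - j. qv p (y ! l))"
      by (rule prod.cong) (use y in \<open>auto simp: nth_append\<close>)
    then show "beta p j (?g y) = ennreal (pmf p 1) ^ j * (\<Prod>l<k - j. qv p (y ! l))"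
      using y assms(1) by (simp add: beta_def)
  qed
  also have "\<dots> = ennreal (pmf p 1) ^ j * (\<Sum>i<K. qv p i) ^ (k - j)"
    by (simp add: sum_distrib_left[symmetric] sum_lists_prod)
  also have "\<dots> \<le> ennreal (pmf p 1) ^ j * ennreal (measure_pmf.expectation p real) ^ (k - j)"
    by (intro mult_left_mono power_mono sum_qv_le assms(2)) auto
  finally show ?thesis .
qed



locale gwl =
  fixes p :: "nat pmf" and Q :: "real measure" and m :: real and e :: real
  assumes Qp: "prob_space Q" and Qb: "sets Q = sets borel"
    and mpos: "m > 0" and integ: "integrable (measure_pmf p) real"
    and m_eq: "m = measure_pmf.expectation p real"
    and e_eq: "(\<integral>\<^sup>+ x. ennreal (1 / x) \<partial>Q) = ennreal e" and e_nonneg: "e \<ge> 0"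
begin

abbreviation "M1 \<equiv> PiM UNIV (\<lambda>_::nat list. measure_pmf p)"
abbreviation "M2 \<equiv> PiM UNIV (\<lambda>_::nat list. Q)"

lemma pps_Q: "product_prob_space (\<lambda>_::nat list. Q)"
  unfolding product_prob_space_def product_prob_space_axioms_def product_sigma_finite_def
  using Qp by (simp add: prob_space_imp_sigma_finite)

lemma M2_prob: "prob_space M2"
  by (rule prob_space_PiM) (rule Qp)

lemma M1_prob: "prob_space M1"
  by (rule prob_space_PiM) (rule prob_space_measure_pmf)

lemma comp_Q[measurable]: "(\<lambda>\<xi>. \<xi> x) \<in> borel_measurable M2"
proof -
  have "(\<lambda>\<xi>. \<xi> x) \<in> measurable M2 Q" by (rule measurable_component_singleton) simp
  then show ?thesis by (simp add: measurable_cong_sets[OF refl Qb])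
qed

lemma int_M2: "(\<integral>\<^sup>+ \<xi>. ennreal (1 / \<xi> x) \<partial>M2) = ennreal e"
proof -
  interpret product_prob_space "\<lambda>_::nat list. Q" UNIV by (rule pps_Q)
  have m1: "(\<lambda>\<xi>. \<xi> x) \<in> measurable M2 Q" by (rule measurable_component_singleton) simp
  have m2: "(\<lambda>y. ennreal (1 / y)) \<in> borel_measurable Q"
    by (subst measurable_cong_sets[OF Qb refl]) measurable
  have "(\<integral>\<^sup>+ \<xi>. ennreal (1 / \<xi> x) \<partial>M2) = (\<integral>\<^sup>+ y. ennreal (1 / y) \<partial>distr M2 Q (\<lambda>\<xi>. \<xi> x))"
    using nn_integral_distr[OF m1, of "\<lambda>y. ennreal (1 / y)"] m2 by simp
  also have "distr M2 Q (\<lambda>\<xi>. \<xi> x) = Q" using PiM_component[of x] by simp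
  finally show ?thesis using e_eq by simp
qed

lemma prod_int:
  assumes [measurable]: "a \<in> borel_measurable M1" "b \<in> borel_measurable M2"
  shows "(\<integral>\<^sup>+ \<omega>. a (fst \<omega>) * b (snd \<omega>) \<partial>(M1 \<Otimes>\<^sub>M M2)) = (\<integral>\<^sup>+ N. a N \<partial>M1) * (\<integral>\<^sup>+ \<xi>. b \<xi> \<partial>M2)"
proof -
  interpret M2: prob_space M2 by (rule M2_prob)
  have "(\<integral>\<^sup>+ \<omega>. a (fst \<omega>) * b (snd \<omega>) \<partial>(M1 \<Otimes>\<^sub>M M2)) = (\<integral>\<^sup>+ N. \<integral>\<^sup>+ \<xi>. a N * b \<xi> \<partial>M2 \<partial>M1)"
    by (rule M2.nn_integral_fst[symmetric, where f="\<lambda>\<omega>. a (fst \<omega>) * b (snd \<omega>)", simplified]) measurable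
  also have "\<dots> = (\<integral>\<^sup>+ N. a N * (\<integral>\<^sup>+ \<xi>. b \<xi> \<partial>M2) \<partial>M1)"
    by (rule nn_integral_cong) (rule nn_integral_cmult, measurable)
  also have "\<dots> = (\<integral>\<^sup>+ N. a N \<partial>M1) * (\<integral>\<^sup>+ \<xi>. b \<xi> \<partial>M2)"
    by (rule nn_integral_multc) measurable
  finally show ?thesis .
qed

end


lemma ennreal4: "a \<ge> 0 \<Longrightarrow> b \<ge> 0 \<Longrightarrow> c \<ge> 0 \<Longrightarrow> d \<ge> 0 \<Longrightarrow>
  ennreal a * ennreal b * (ennreal c * ennreal d) = ennreal (a * b * (c * d))"
  by (simp add: ennreal_mult)

context gwl begin

lemma meas_term[measurable]:
  "(\<lambda>\<omega>. indicator (Bset j) (fst \<omega>) * gterm m n j (fst \<omega>) (snd \<omega>) x) \<in> borel_measurable (M1 \<Otimes>\<^sub>M M2)"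
  unfolding gterm_def by measurable

lemma meas_AT: "{N. (\<forall>i<j. N (spine i) = 1) \<and> in_tree N x} \<in> sets M1"
proof -
  have "{N. (\<forall>i<j. N (spine i) = 1) \<and> in_tree N x} = {N \<in> space M1. (\<forall>i<j. N (spine i) = 1) \<and> in_tree N x}"
    by (simp add: space_M1)
  also have "\<dots> \<in> sets M1" by measurable
  finally show ?thesis .
qed

lemma term_int:
  assumes "j < length x"
  shows "(\<integral>\<^sup>+ \<omega>. indicator (Bset j) (fst \<omega>) * gterm m n j (fst \<omega>) (snd \<omega>) x \<partial>(M1 \<Otimes>\<^sub>M M2))
     \<le> ennreal (1 / ((real n - real j)\<^sup>2 * m ^ length x)) * beta p j x * ennreal e"
proof -
  define c where "c = ennreal (1 / ((real n - real j)\<^sup>2 * m ^ length x))"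
  define a where "a N = indicator (Bset j \<inter> {N. in_tree N x}) N * c" for N
  have [measurable]: "a \<in> borel_measurable M1" unfolding a_def by measurable
  have "(\<integral>\<^sup>+ \<omega>. indicator (Bset j) (fst \<omega>) * gterm m n j (fst \<omega>) (snd \<omega>) x \<partial>(M1 \<Otimes>\<^sub>M M2))
      = (\<integral>\<^sup>+ \<omega>. a (fst \<omega>) * ennreal (1 / snd \<omega> x) \<partial>(M1 \<Otimes>\<^sub>M M2))"
    by (rule nn_integral_cong) (use assms in \<open>auto simp: a_def gterm_def c_def indicator_def\<close>)
  also have "\<dots> = (\<integral>\<^sup>+ N. a N \<partial>M1) * (\<integral>\<^sup>+ \<xi>. ennreal (1 / \<xi> x) \<partial>M2)"
    by (rule prod_int) measurable
  also have "(\<integral>\<^sup>+ N. a N \<partial>M1) = emeasure M1 (Bset j \<inter> {N. in_tree N x}) * c"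
    unfolding a_def by (subst nn_integral_multc) (auto simp: space_M1)
  also have "emeasure M1 (Bset j \<inter> {N. in_tree N x}) \<le> beta p j x"
  proof -
    have "emeasure M1 (Bset j \<inter> {N. in_tree N x}) \<le> emeasure M1 {N. (\<forall>i<j. N (spine i) = 1) \<and> in_tree N x}"
      by (rule emeasure_mono[OF _ meas_AT]) (auto simp: Bset_def)
    also have "\<dots> \<le> beta p j x" using emeasure_AT[of j x p] assms by simp
    finally show ?thesis .
  qed
  then have "emeasure M1 (Bset j \<inter> {N. in_tree N x}) * c * (\<integral>\<^sup>+ \<xi>. ennreal (1 / \<xi> x) \<partial>M2)
      \<le> beta p j x * c * ennreal e"
    by (simp add: int_M2 mult_right_mono)
  finally show ?thesis unfolding c_def by (simp add: mult_ac)
qed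

lemma term_int0:
  assumes "\<not> j < length x"
  shows "(\<integral>\<^sup>+ \<omega>. indicator (Bset j) (fst \<omega>) * gterm m n j (fst \<omega>) (snd \<omega>) x \<partial>(M1 \<Otimes>\<^sub>M M2)) = 0"
  using assms by (simp add: gterm_def)

definition Hs :: "nat \<Rightarrow> nat \<Rightarrow> nat \<Rightarrow> (nat list \<Rightarrow> nat) \<times> (nat list \<Rightarrow> real) \<Rightarrow> ennreal" where
  "Hs n j K \<omega> = (\<Sum>x\<in>LK n K. indicator (Bset j) (fst \<omega>) * gterm m n j (fst \<omega>) (snd \<omega>) x)"

lemma meas_Hs[measurable]: "Hs n j K \<in> borel_measurable (M1 \<Otimes>\<^sub>M M2)"
  unfolding Hs_def by measurable

lemma Hs_int:
  assumes "j < n"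
  shows "(\<integral>\<^sup>+ \<omega>. Hs n j K \<omega> \<partial>(M1 \<Otimes>\<^sub>M M2))
     \<le> ennreal (e * pmf p 1 ^ j / ((real n - real j) * m ^ j))"
proof -
  let ?c = "\<lambda>k. ennreal (1 / ((real n - real j)\<^sup>2 * m ^ k))"
  let ?t = "\<lambda>x. (if j < length x then ?c (length x) * beta p j x * ennreal e else 0)"
  have "(\<integral>\<^sup>+ \<omega>. Hs n j K \<omega> \<partial>(M1 \<Otimes>\<^sub>M M2))
     = (\<Sum>x\<in>LK n K. \<integral>\<^sup>+ \<omega>. indicator (Bset j) (fst \<omega>) * gterm m n j (fst \<omega>) (snd \<omega>) x \<partial>(M1 \<Otimes>\<^sub>M M2))"
    unfolding Hs_def by (rule nn_integral_sum) measurable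
  also have "\<dots> \<le> (\<Sum>x\<in>LK n K. ?t x)"
    by (rule sum_mono) (auto simp: term_int term_int0)
  also have "\<dots> = (\<Sum>k\<in>{..n}. \<Sum>x\<in>{x\<in>LK n K. length x = k}. ?t x)"
    by (rule sum.group[symmetric]) (auto simp: finite_LK, auto simp: LK_def)
  also have "\<dots> \<le> (\<Sum>k\<in>{..n}. if j < k then ennreal (e * pmf p 1 ^ j / ((real n - real j)\<^sup>2 * m ^ j)) else 0)"
  proof (rule sum_mono)
    fix k assume k: "k \<in> {..n}"
    show "(\<Sum>x\<in>{x\<in>LK n K. length x = k}. ?t x)
        \<le> (if j < k then ennreal (e * pmf p 1 ^ j / ((real n - real j)\<^sup>2 * m ^ j)) else 0)"
    proof (cases "j < k")
      case True
      have "(\<Sum>x\<in>{x\<in>LK n K. length x = k}. ?t x) = (\<Sum>x\<in>{x\<in>LK n K. length x = k}. ?c k * ennreal e * beta p j x)"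
        by (rule sum.cong) (use True in \<open>auto simp: mult_ac\<close>)
      also have "\<dots> = ?c k * ennreal e * (\<Sum>x\<in>{x\<in>LK n K. length x = k}. beta p j x)"
        by (simp add: sum_distrib_left)
      also have "\<dots> \<le> ?c k * ennreal e * (ennreal (pmf p 1) ^ j * ennreal (measure_pmf.expectation p real) ^ (k - j))"
        by (intro mult_left_mono sum_beta integ) (use True in auto)
      also have "\<dots> = ennreal (e * pmf p 1 ^ j / ((real n - real j)\<^sup>2 * m ^ j))"
      proof -
        have mk: "m ^ k = m ^ j * m ^ (k - j)" using True by (simp add: power_add[symmetric])
        have "?c k * ennreal e * (ennreal (pmf p 1) ^ j * ennreal m ^ (k - j))
            = ennreal (1 / ((real n - real j)\<^sup>2 * m ^ k) * e * (pmf p 1 ^ j * m ^ (k - j)))"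
          using mpos e_nonneg by (simp only: ennreal_power[OF pmf_nonneg] ennreal_power[OF less_imp_le[OF mpos]]) (rule ennreal4, auto)
        also have "1 / ((real n - real j)\<^sup>2 * m ^ k) * e * (pmf p 1 ^ j * m ^ (k - j))
            = e * pmf p 1 ^ j / ((real n - real j)\<^sup>2 * m ^ j)"
          unfolding mk using mpos by (simp add: field_simps)
        finally show ?thesis by (simp add: m_eq)
      qed
      finally show ?thesis using True by simp
    qed simp
  qed
  also have "\<dots> = of_nat (card {k\<in>{..n}. j < k}) * ennreal (e * pmf p 1 ^ j / ((real n - real j)\<^sup>2 * m ^ j))"
    by (simp add: sum.If_cases Int_def)
  also have "card {k\<in>{..n}. j < k} = n - j"
  proof -
    have "{k\<in>{..n}. j < k} = {Suc j..n}" by auto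
    then show ?thesis by simp
  qed
  also have "of_nat (n - j) * ennreal (e * pmf p 1 ^ j / ((real n - real j)\<^sup>2 * m ^ j))
      = ennreal (e * pmf p 1 ^ j / ((real n - real j) * m ^ j))"
  proof -
    have "of_nat (n - j) * ennreal (e * pmf p 1 ^ j / ((real n - real j)\<^sup>2 * m ^ j))
        = ennreal (real (n - j) * (e * pmf p 1 ^ j / ((real n - real j)\<^sup>2 * m ^ j)))"
      using mpos e_nonneg
      by (simp only: ennreal_of_nat_eq_real_of_nat) (rule ennreal_mult''[symmetric], simp)
    also have "real (n - j) * (e * pmf p 1 ^ j / ((real n - real j)\<^sup>2 * m ^ j))
        = e * pmf p 1 ^ j / ((real n - real j) * m ^ j)"
    proof -
      have d: "real (n - j) = real n - real j" using assms by (simp add: of_nat_diff)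
      have dp: "real n - real j > 0" using assms by simp
      have gen: "d * (X / (d\<^sup>2 * Y)) = X / (d * Y)" if "d > 0" for d X Y :: real
        using that by (simp add: power2_eq_square)
      show ?thesis unfolding d using gen[OF dp] by simp
    qed
    finally show ?thesis .
  qed
  finally show ?thesis .
qed

end


lemma ennreal_sub_le:
  assumes "ennreal a \<le> A + ennreal b" "b \<ge> 0"
  shows "ennreal (a - b) \<le> A"
proof (cases A)
  case (real r)
  have "ennreal a \<le> ennreal (r + b)" using assms(1) real assms(2) by (simp only: ennreal_plus)
  then have "a \<le> r + b" using real assms(2) ennreal_le_iff[of "r + b" a] by simp
  then have "a - b \<le> r" by simp
  then show ?thesis using real by (simp add: ennreal_leI)
next
  case top then show ?thesis by simp
qed

lemma le_minus_plus: "(a::ennreal) \<le> a - b + b"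
  using diff_add_self_ennreal by fastforce

context gwl begin

definition H :: "nat \<Rightarrow> nat \<Rightarrow> (nat list \<Rightarrow> nat) \<times> (nat list \<Rightarrow> real) \<Rightarrow> ennreal" where
  "H n j \<omega> = (SUP K. Hs n j K \<omega>)"

lemma meas_H[measurable]: "H n j \<in> borel_measurable (M1 \<Otimes>\<^sub>M M2)"
  unfolding H_def by measurable

lemma incseq_Hs: "incseq (\<lambda>K. Hs n j K)"
  unfolding incseq_def le_fun_def Hs_def
  by (auto intro!: sum_mono2 finite_LK LK_mono)

lemma H_int:
  assumes "j < n"
  shows "(\<integral>\<^sup>+ \<omega>. H n j \<omega> \<partial>(M1 \<Otimes>\<^sub>M M2)) \<le> ennreal (e * pmf p 1 ^ j / ((real n - real j) * m ^ j))"
proof -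
  have "(\<integral>\<^sup>+ \<omega>. H n j \<omega> \<partial>(M1 \<Otimes>\<^sub>M M2)) = (SUP K. \<integral>\<^sup>+ \<omega>. Hs n j K \<omega> \<partial>(M1 \<Otimes>\<^sub>M M2))"
    unfolding H_def by (rule nn_integral_monotone_convergence_SUP[OF incseq_Hs]) measurable
  also have "\<dots> \<le> ennreal (e * pmf p 1 ^ j / ((real n - real j) * m ^ j))"
    by (rule SUP_least) (rule Hs_int[OF assms])
  finally show ?thesis .
qed

lemma En_le_H:
  assumes "j < n" "fst \<omega> \<in> Bset j"
  shows "En m (fst \<omega>) (snd \<omega>) n j \<le> H n j \<omega>"
proof -
  obtain K where K: "tree_ball (fst \<omega>) n \<subseteq> LK n K" using ball_cover by blast
  have "En m (fst \<omega>) (snd \<omega>) n j \<le> (\<Sum>x\<in>LK n K. gterm m n j (fst \<omega>) (snd \<omega>) x)"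
    by (rule En_le_sum[OF assms(1) mpos K])
  also have "\<dots> = Hs n j K \<omega>" using assms(2) by (simp add: Hs_def)
  also have "\<dots> \<le> H n j \<omega>" unfolding H_def by (rule SUP_upper) simp
  finally show ?thesis .
qed

definition tm :: "nat \<Rightarrow> real \<Rightarrow> nat \<Rightarrow> (nat list \<Rightarrow> nat) \<times> (nat list \<Rightarrow> real) \<Rightarrow> ennreal" where
  "tm n t j \<omega> = ennreal (2 * t) * indicator (Bset j) (fst \<omega>) - ennreal (t\<^sup>2) * H n j \<omega>"

lemma meas_tm[measurable]: "tm n t j \<in> borel_measurable (M1 \<Otimes>\<^sub>M M2)"
  unfolding tm_def by measurable

lemma R_ge_terms:
  assumes "\<And>j. tt j \<ge> 0"
  shows "(\<Sum>j<n. tm n (tt j) j \<omega>) \<le> eff_resistance m (fst \<omega>) (snd \<omega>) n"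
proof (cases "\<exists>j<n. fst \<omega> \<in> Bset j")
  case True
  then obtain j0 where j0: "j0 < n" "fst \<omega> \<in> Bset j0" by blast
  have other: "tm n (tt j) j \<omega> = 0" if "j \<noteq> j0" for j
  proof -
    have "fst \<omega> \<notin> Bset j" using j0(2) Bset_disj[of j j0] Bset_disj[of j0 j] that
      by (cases "j < j0") auto
    then show ?thesis by (simp add: tm_def)
  qed
  have "(\<Sum>j<n. tm n (tt j) j \<omega>) = tm n (tt j0) j0 \<omega>"
    using j0(1) other by (subst sum.remove[of _ j0]) auto
  also have "\<dots> = ennreal (2 * tt j0) - ennreal ((tt j0)\<^sup>2) * H n j0 \<omega>"
    using j0 by (simp add: tm_def)
  also have "\<dots> \<le> 1 / eff_conductance m (fst \<omega>) (snd \<omega>) n"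
  proof (rule recip_bound[OF _ assms])
    show "eff_conductance m (fst \<omega>) (snd \<omega>) n \<le> H n j0 \<omega>"
      using cond_le_En[OF j0(1)] En_le_H[OF j0] by (rule order_trans)
  qed
  finally show ?thesis by (simp add: eff_resistance_def)
next
  case False
  then have "tm n (tt j) j \<omega> = 0" if "j < n" for j using that by (simp add: tm_def)
  then show ?thesis by simp
qed

lemma int_term:
  assumes "j < n" "t \<ge> 0"
  shows "ennreal (2 * t * (pmf p 1 ^ j * (1 - pmf p 1)) - t\<^sup>2 * (e * pmf p 1 ^ j / ((real n - real j) * m ^ j)))
    \<le> (\<integral>\<^sup>+ \<omega>. tm n t j \<omega> \<partial>(M1 \<Otimes>\<^sub>M M2))"
proof (rule ennreal_sub_le)
  let ?V = "e * pmf p 1 ^ j / ((real n - real j) * m ^ j)"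
  show "0 \<le> t\<^sup>2 * ?V" using e_nonneg mpos assms by simp
  interpret M2: prob_space M2 by (rule M2_prob)
  have ind: "(\<integral>\<^sup>+ \<omega>. indicator (Bset j) (fst \<omega>) * 1 \<partial>(M1 \<Otimes>\<^sub>M M2)) = emeasure M1 (Bset j)"
    by (subst prod_int) (auto simp: M2.emeasure_space_1)
  have "ennreal (2 * t * (pmf p 1 ^ j * (1 - pmf p 1))) = ennreal (2 * t) * emeasure M1 (Bset j)"
    using assms pmf_le_1[of p 1] by (simp add: emeasure_Bset ennreal_mult ennreal_power)
  also have "\<dots> = (\<integral>\<^sup>+ \<omega>. ennreal (2 * t) * indicator (Bset j) (fst \<omega>) \<partial>(M1 \<Otimes>\<^sub>M M2))"
    using ind by (subst nn_integral_cmult) auto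
  also have "\<dots> \<le> (\<integral>\<^sup>+ \<omega>. tm n t j \<omega> + ennreal (t\<^sup>2) * H n j \<omega> \<partial>(M1 \<Otimes>\<^sub>M M2))"
    by (rule nn_integral_mono) (simp add: tm_def le_minus_plus)
  also have "\<dots> = (\<integral>\<^sup>+ \<omega>. tm n t j \<omega> \<partial>(M1 \<Otimes>\<^sub>M M2)) + ennreal (t\<^sup>2) * (\<integral>\<^sup>+ \<omega>. H n j \<omega> \<partial>(M1 \<Otimes>\<^sub>M M2))"
    by (subst nn_integral_add) (auto simp: nn_integral_cmult)
  also have "\<dots> \<le> (\<integral>\<^sup>+ \<omega>. tm n t j \<omega> \<partial>(M1 \<Otimes>\<^sub>M M2)) + ennreal (t\<^sup>2) * ennreal ?V"
    by (intro add_left_mono mult_left_mono H_int assms) auto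
  also have "ennreal (t\<^sup>2) * ennreal ?V = ennreal (t\<^sup>2 * ?V)"
    by (rule ennreal_mult[symmetric]) (use e_nonneg mpos assms in \<open>auto intro!: divide_nonneg_pos mult_pos_pos\<close>)
  finally show "ennreal (2 * t * (pmf p 1 ^ j * (1 - pmf p 1))) \<le> (\<integral>\<^sup>+ \<omega>. tm n t j \<omega> \<partial>(M1 \<Otimes>\<^sub>M M2)) + ennreal (t\<^sup>2 * ?V)" .
qed

end


lemma alg_key:
  fixes P V :: real
  assumes "V > 0"
  shows "2 * (P / V) * P - (P / V)\<^sup>2 * V = P\<^sup>2 / V"
  using assms by (simp add: power2_eq_square field_simps)

context gwl begin

lemma int_R_bound:
  assumes p1pos: "0 < pmf p 1" and epos: "e > 0" and p1m: "pmf p 1 * m \<ge> 1"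
  shows "ennreal ((1 - pmf p 1)\<^sup>2 / e * (\<Sum>j<n. real (n - j)))
     \<le> (\<integral>\<^sup>+ \<omega>. eff_resistance m (fst \<omega>) (snd \<omega>) n \<partial>(M1 \<Otimes>\<^sub>M M2))"
proof -
  define P where "P j = pmf p 1 ^ j * (1 - pmf p 1)" for j
  define V where "V j = e * pmf p 1 ^ j / ((real n - real j) * m ^ j)" for j
  define tt where "tt j = max 0 (P j / V j)" for j
  have tt0: "tt j \<ge> 0" for j by (simp add: tt_def)
  have P0: "P j \<ge> 0" for j using pmf_le_1[of p 1] by (simp add: P_def)
  have Vpos: "V j > 0" if "j < n" for j using that epos p1pos mpos by (simp add: V_def)
  have ttj: "tt j = P j / V j" if "j < n" for j using P0 Vpos[OF that] by (simp add: tt_def)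
  have bound: "(1 - pmf p 1)\<^sup>2 / e * real (n - j) \<le> 2 * tt j * P j - (tt j)\<^sup>2 * V j" if j: "j < n" for j
  proof -
    have "2 * tt j * P j - (tt j)\<^sup>2 * V j = (P j)\<^sup>2 / V j" unfolding ttj[OF j] by (rule alg_key[OF Vpos[OF j]])
    also have "(P j)\<^sup>2 / V j = (pmf p 1 * m) ^ j * ((1 - pmf p 1)\<^sup>2 / e * real (n - j))"
      using j epos p1pos mpos
      by (simp add: P_def V_def of_nat_diff power2_eq_square power_mult_distrib field_simps)
    also have "\<dots> \<ge> 1 * ((1 - pmf p 1)\<^sup>2 / e * real (n - j))"
      by (rule mult_right_mono) (use p1m epos in \<open>auto intro: one_le_power\<close>)
    finally show ?thesis by simp
  qed
  have "ennreal ((1 - pmf p 1)\<^sup>2 / e * (\<Sum>j<n. real (n - j)))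
      = (\<Sum>j<n. ennreal ((1 - pmf p 1)\<^sup>2 / e * real (n - j)))"
  proof -
    have "(\<Sum>j<n. ennreal ((1 - pmf p 1)\<^sup>2 / e * real (n - j))) = ennreal (\<Sum>j<n. (1 - pmf p 1)\<^sup>2 / e * real (n - j))"
      by (rule sum_ennreal) (use epos in auto)
    then show ?thesis by (simp only: sum_distrib_left)
  qed
  also have "\<dots> \<le> (\<Sum>j<n. \<integral>\<^sup>+ \<omega>. tm n (tt j) j \<omega> \<partial>(M1 \<Otimes>\<^sub>M M2))"
  proof (rule sum_mono)
    fix j assume "j \<in> {..<n}"
    then have j: "j < n" by simp
    have "ennreal ((1 - pmf p 1)\<^sup>2 / e * real (n - j)) \<le> ennreal (2 * tt j * P j - (tt j)\<^sup>2 * V j)"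
      by (rule ennreal_leI[OF bound[OF j]])
    also have "\<dots> \<le> (\<integral>\<^sup>+ \<omega>. tm n (tt j) j \<omega> \<partial>(M1 \<Otimes>\<^sub>M M2))"
      using int_term[OF j tt0[of j]] unfolding P_def V_def .
    finally show "ennreal ((1 - pmf p 1)\<^sup>2 / e * real (n - j)) \<le> (\<integral>\<^sup>+ \<omega>. tm n (tt j) j \<omega> \<partial>(M1 \<Otimes>\<^sub>M M2))" .
  qed
  also have "\<dots> = (\<integral>\<^sup>+ \<omega>. (\<Sum>j<n. tm n (tt j) j \<omega>) \<partial>(M1 \<Otimes>\<^sub>M M2))"
    by (rule nn_integral_sum[symmetric]) measurable
  also have "\<dots> \<le> (\<integral>\<^sup>+ \<omega>. eff_resistance m (fst \<omega>) (snd \<omega>) n \<partial>(M1 \<Otimes>\<^sub>M M2))"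
    by (rule nn_integral_mono) (rule R_ge_terms[OF tt0])
  finally show ?thesis .
qed

end


lemma sum_nj: "(\<Sum>j<n. real (n - j)) * 2 = real n * (real n + 1)"
proof (induction n)
  case 0 then show ?case by simp
next
  case (Suc n)
  have "(\<Sum>j<Suc n. real (Suc n - j)) = (\<Sum>j<n. real (Suc n - j)) + 1" by simp
  also have "(\<Sum>j<n. real (Suc n - j)) = (\<Sum>j<n. real (n - j) + 1)"
    by (rule sum.cong) (auto simp: Suc_diff_le)
  also have "\<dots> = (\<Sum>j<n. real (n - j)) + real n" by (simp add: sum.distrib)
  finally show ?case using Suc by (simp add: algebra_simps)
qed

lemma p1_lt1:
  assumes "measure_pmf.expectation p real > 1"
  shows "pmf p 1 < 1"
proof (rule ccontr)
  assume "\<not> pmf p 1 < 1"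
  then have p1: "pmf p 1 = 1" using pmf_le_1[of p 1] by simp
  have "measure (measure_pmf p) (UNIV - {1}) = 1 - measure (measure_pmf p) {1}"
    using measure_pmf.prob_compl[of "{1}" p] by simp
  then have z: "measure (measure_pmf p) (UNIV - {1}) = 0" using p1 by (simp add: measure_pmf_single)
  have "set_pmf p \<subseteq> {1}"
  proof
    fix k assume k: "k \<in> set_pmf p"
    show "k \<in> {1}"
    proof (rule ccontr)
      assume "k \<notin> {1}"
      then have "measure (measure_pmf p) {k} \<le> measure (measure_pmf p) (UNIV - {1})"
        by (intro measure_pmf.finite_measure_mono) auto
      then have "pmf p k = 0" using z by (simp add: measure_pmf_single pmf_nonneg antisym)
      with k show False by (simp add: set_pmf_eq)
    qed
  qed
  then have "p = return_pmf 1" by (simp add: set_pmf_subset_singleton)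
  then have "measure_pmf.expectation p real = 1" by simp
  with assms show False by simp
qed

theorem mainTheorem14:
  fixes p :: "nat pmf" and Q :: "real measure" and m :: real
  assumes p0: "pmf p 0 = 0"
    and mean_fin: "integrable (measure_pmf p) real"
    and m_def: "m = measure_pmf.expectation p real"
    and m_gt: "m > 1"
    and Q_prob: "prob_space Q"
    and Q_borel: "sets Q = sets borel"
    and Q_pos: "AE x in Q. x > 0"
    and moments: "(\<integral>\<^sup>+ x. ennreal (x\<^sup>2 + 1 / x) \<partial>Q)
                    + (\<integral>\<^sup>+ k. ennreal (real k ^ 3) \<partial>measure_pmf p) < \<infinity>"
    and p1: "pmf p 1 * m \<ge> 1"
  shows "liminf (\<lambda>n. (\<integral>\<^sup>+ \<omega>. eff_resistance m (fst \<omega>) (snd \<omega>) n \<partial>gw_space p Q)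
                       / of_nat n) = \<infinity>"
proof -
  define E where "E = (\<integral>\<^sup>+ x. ennreal (1 / x) \<partial>Q)"
  have meas_inv: "(\<lambda>x. ennreal (1 / x)) \<in> borel_measurable Q"
    by (subst measurable_cong_sets[OF Q_borel refl]) measurable
  have "E \<le> (\<integral>\<^sup>+ x. ennreal (x\<^sup>2 + 1 / x) \<partial>Q)"
    unfolding E_def by (rule nn_integral_mono) (simp add: ennreal_leI)
  also have "\<dots> \<le> (\<integral>\<^sup>+ x. ennreal (x\<^sup>2 + 1 / x) \<partial>Q)
                    + (\<integral>\<^sup>+ k. ennreal (real k ^ 3) \<partial>measure_pmf p)"
    by (rule add_increasing2) auto
  also have "\<dots> < \<infinity>" by (rule moments)
  finally have Efin: "E < \<infinity>" .
  define e where "e = enn2real E"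
  have E_eq: "E = ennreal e" using Efin unfolding e_def by (simp add: less_top)
  have e0: "e \<ge> 0" unfolding e_def by simp
  have epos: "e > 0"
  proof (rule ccontr)
    assume "\<not> e > 0"
    then have "E = 0" using E_eq e0 by simp
    then have "AE x in Q. ennreal (1 / x) = 0" unfolding E_def using nn_integral_0_iff_AE[OF meas_inv] by simp
    with Q_pos have "AE x in Q. False" by eventually_elim simp
    then show False using Q_prob by (simp add: prob_space.AE_False)
  qed
  have mpos: "m > 0" using m_gt by simp
  interpret gwl p Q m e
    using Q_prob Q_borel mpos mean_fin m_def E_eq[unfolded E_def] e0 by (simp add: gwl_def)
  have p1pos: "0 < pmf p 1"
  proof (rule ccontr)
    assume "\<not> 0 < pmf p 1"
    then have "pmf p 1 = 0" using pmf_nonneg[of p 1] by linarith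
    with p1 show False by simp
  qed
  have p1lt: "pmf p 1 < 1" using p1_lt1[of p] m_gt m_def by simp
  define c where "c = (1 - pmf p 1)\<^sup>2 / e"
  have cpos: "c > 0" unfolding c_def using p1lt epos by simp
  have low: "ennreal (c / 2 * real n) \<le> (\<integral>\<^sup>+ \<omega>. eff_resistance m (fst \<omega>) (snd \<omega>) n \<partial>gw_space p Q) / of_nat n"
    if n: "n \<ge> 1" for n
  proof -
    have "ennreal (c * (\<Sum>j<n. real (n - j))) \<le> (\<integral>\<^sup>+ \<omega>. eff_resistance m (fst \<omega>) (snd \<omega>) n \<partial>gw_space p Q)"
      unfolding c_def gw_space_def by (rule int_R_bound[OF p1pos epos p1])
    moreover have "c / 2 * real n * real n \<le> c * (\<Sum>j<n. real (n - j))"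
    proof -
      have "c * (\<Sum>j<n. real (n - j)) = c / 2 * (real n * (real n + 1))"
        using sum_nj[of n] by (simp add: field_simps)
      also have "\<dots> \<ge> c / 2 * (real n * real n)"
        using cpos by (intro mult_left_mono) auto
      finally show ?thesis by simp
    qed
    ultimately have le: "ennreal (c / 2 * real n * real n) \<le> (\<integral>\<^sup>+ \<omega>. eff_resistance m (fst \<omega>) (snd \<omega>) n \<partial>gw_space p Q)"
      using ennreal_leI order_trans by blast
    have "ennreal (c / 2 * real n) = ennreal (c / 2 * real n * real n) / ennreal (real n)"
      using n cpos by (subst divide_ennreal) auto
    also have "\<dots> \<le> (\<integral>\<^sup>+ \<omega>. eff_resistance m (fst \<omega>) (snd \<omega>) n \<partial>gw_space p Q) / ennreal (real n)"
      by (rule divide_right_mono_ennreal[OF le])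
    finally show ?thesis by (simp add: ennreal_of_nat_eq_real_of_nat)
  qed
  have lim: "((\<lambda>n. ennreal (c / 2 * real n)) \<longlongrightarrow> top) sequentially"
    unfolding ennreal_tendsto_top_eq_at_top
    by (rule filterlim_tendsto_pos_mult_at_top[OF tendsto_const _ filterlim_real_sequentially]) (use cpos in simp)
  have "top = liminf (\<lambda>n. ennreal (c / 2 * real n))"
    by (rule lim_imp_Liminf[OF _ lim, symmetric]) simp
  also have "\<dots> \<le> liminf (\<lambda>n. (\<integral>\<^sup>+ \<omega>. eff_resistance m (fst \<omega>) (snd \<omega>) n \<partial>gw_space p Q) / of_nat n)"
    by (rule Liminf_mono, rule eventually_sequentiallyI[of 1], rule low)
  finally show ?thesis by (simp add: top_unique)
qed


end
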